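(* For every $\delta_0>0$, every $c_0\in(0,1)$ and every $\varepsilon>0$ there exists $\kappa=\kappa(\delta_0,\varepsilon,c_0)>0$ with the following property. Let $n\in\mathbb N$, let $P$ be an algebraic polynomial of degree at most $n$ with $\|P\|_{[-1,1]}\le 1$, and let $\delta\ge\delta_0$ and $c_0\le c<1$ be such that $0<\varepsilon<\frac{1-c}{2-c}$. Suppose $E\subset[-1,1]$ is a measurable set with $|E|<\kappa$ and $\|P\|_E\le e^{-\delta n}$, and suppose $I$ is an interval with $E\subset I\subset[-1,1]$ and $$|I|\le |E|^{\frac{1}{2-c}+\varepsilon}.$$ Then $\|P\|_I\le e^{-c\delta n}$.
   Context: For a set $F$, $\|g\|_F=\sup_{x\in F}|g(x)|$ denotes the uniform norm on $F$; $|\cdot|$ denotes Lebesgue measure (length). *)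

theory Defs
  imports "HOL-Analysis.Analysis" "HOL-Computational_Algebra.Polynomial"
begin

definition unif_norm :: "real poly \<Rightarrow> real set \<Rightarrow> real" where
  "unif_norm P F = (SUP x\<in>F. \<bar>poly P x\<bar>)"

end

theory Submission
  imports Defs
begin


lemma lagrange_interp:
  fixes S :: "real set" and p :: "real poly"
  assumes fin: "finite S" and deg: "degree p < card S"
  shows "poly p x = (\<Sum>s\<in>S. poly p s * (\<Prod>t\<in>S-{s}. (x - t) / (s - t)))"
proof -
  define q where "q = (\<Sum>s\<in>S. smult (poly p s / (\<Prod>t\<in>S-{s}. (s - t))) (\<Prod>t\<in>S-{s}. [:-t,1:]))"
  have degq: "degree q < card S"
  proof -
    have "degree q \<le> card S - 1"
      unfolding q_def
    proof (rule degree_sum_le)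
      fix s assume "s \<in> S"
      have "degree (\<Prod>t\<in>S-{s}. [:-t,1:]) \<le> (\<Sum>t\<in>S-{s}. degree [:-t,(1::real):])"
        using degree_prod_sum_le[of "S-{s}" "\<lambda>t. [:-t,(1::real):]"] fin by (simp add: o_def)
      also have "\<dots> = card (S - {s})" by simp
      also have "\<dots> = card S - 1" using \<open>s\<in>S\<close> fin by simp
      finally show "degree (smult (poly p s / (\<Prod>t\<in>S-{s}. (s - t))) (\<Prod>t\<in>S-{s}. [:-t,1:])) \<le> card S - 1"
        by (meson degree_smult_le order_trans)
    qed (rule fin)
    moreover have "card S > 0" using deg by simp
    ultimately show ?thesis by linarith
  qed
  have polyq: "poly q y = (\<Sum>s\<in>S. poly p s * (\<Prod>t\<in>S-{s}. (y - t) / (s - t)))" for y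
    unfolding q_def by (simp add: poly_sum poly_prod prod_dividef)
  have "p = q"
  proof (rule poly_eqI_degree[of S])
    fix s0 assume s0: "s0 \<in> S"
    have "poly q s0 = (\<Sum>s\<in>S. if s = s0 then poly p s0 else 0)"
      unfolding polyq
    proof (rule sum.cong[OF refl])
      fix s assume s: "s \<in> S"
      show "poly p s * (\<Prod>t\<in>S-{s}. (s0 - t) / (s - t)) = (if s = s0 then poly p s0 else 0)"
      proof (cases "s = s0")
        case True
        then show ?thesis by (simp add: prod.neutral)
      next
        case False
        then have "(\<Prod>t\<in>S-{s}. (s0 - t) / (s - t)) = 0"
          using fin s0 by (intro prod_zero) auto
        then show ?thesis using False by simp
      qed
    qed
    also have "\<dots> = poly p s0" using s0 fin by simp
    finally show "poly p s0 = poly q s0" by simp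
  qed (rule deg, rule degq)
  then have "poly p x = poly q x" by simp
  also have "\<dots> = (\<Sum>s\<in>S. poly p s * (\<Prod>t\<in>S-{s}. (x - t) / (s - t)))" by (rule polyq)
  finally show ?thesis .
qed



lemma lagrange_interp_idx:
  fixes A :: "nat set" and z :: "nat \<Rightarrow> real" and p :: "real poly"
  assumes fin: "finite A" and inj: "inj_on z A" and deg: "degree p < card A"
  shows "poly p x = (\<Sum>i\<in>A. poly p (z i) * (\<Prod>j\<in>A-{i}. (x - z j) / (z i - z j)))"
proof -
  have "poly p x = (\<Sum>s\<in>z`A. poly p s * (\<Prod>t\<in>z`A-{s}. (x - t) / (s - t)))"
    by (rule lagrange_interp) (use fin inj deg in \<open>auto simp: card_image\<close>)
  also have "\<dots> = (\<Sum>i\<in>A. poly p (z i) * (\<Prod>t\<in>z`A-{z i}. (x - t) / (z i - t)))"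
    by (subst sum.reindex[OF inj]) simp
  also have "\<dots> = (\<Sum>i\<in>A. poly p (z i) * (\<Prod>j\<in>A-{i}. (x - z j) / (z i - z j)))"
  proof (rule sum.cong[OF refl])
    fix i assume i: "i \<in> A"
    have e: "z`A-{z i} = z`(A-{i})" using inj i by (auto simp: inj_on_def)
    have inj2: "inj_on z (A-{i})" using inj by (auto simp: inj_on_def)
    show "poly p (z i) * (\<Prod>t\<in>z`A-{z i}. (x - t) / (z i - t)) = poly p (z i) * (\<Prod>j\<in>A-{i}. (x - z j) / (z i - z j))"
      unfolding e by (subst prod.reindex[OF inj2]) simp
  qed
  finally show ?thesis .
qed

fun cheb :: "nat \<Rightarrow> real poly" where
  "cheb 0 = 1"
| "cheb (Suc 0) = [:0,1:]"
| "cheb (Suc (Suc n)) = smult 2 [:0,1:] * cheb (Suc n) - cheb n"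

lemma degree_cheb: "degree (cheb n) \<le> n"
proof (induction n rule: cheb.induct)
  case (3 n)
  have "degree (smult 2 [:0,1:] * cheb (Suc n)) \<le> Suc (Suc n)"
    using degree_mult_le[of "smult 2 [:0,(1::real):]" "cheb (Suc n)"] 3(1) by simp
  moreover have "degree (cheb n) \<le> Suc (Suc n)" using 3(2) by simp
  ultimately show ?case by (simp add: degree_diff_le)
qed auto

lemma cheb_cos: "poly (cheb n) (cos t) = cos (real n * t)"
proof (induction n rule: cheb.induct)
  case (3 n)
  have "cos (real (Suc (Suc n)) * t) = 2 * cos t * cos (real (Suc n) * t) - cos (real n * t)"
  proof -
    have a: "real (Suc (Suc n)) * t = real (Suc n) * t + t" by (simp add: algebra_simps)
    have b: "real n * t = real (Suc n) * t - t" by (simp add: algebra_simps)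
    show ?thesis unfolding a b cos_add cos_diff by (simp add: algebra_simps)
  qed
  then show ?case using 3 by simp
qed auto

lemma cheb_closed:
  fixes y :: real
  assumes "y \<ge> 1"
  defines "r \<equiv> y + sqrt (y^2 - 1)" and "s \<equiv> y - sqrt (y^2 - 1)"
  shows "poly (cheb n) y = (r^n + s^n) / 2"
proof -
  have rs: "r * s = 1" unfolding r_def s_def using assms(1)
    by (simp add: algebra_simps power2_eq_square[symmetric])
  have rps: "r + s = 2 * y" unfolding r_def s_def by simp
  show ?thesis
  proof (induction n rule: cheb.induct)
    case 1 then show ?case by simp
  next
    case 2 then show ?case using rps by simp
  next
    case (3 n)
    have "poly (cheb (Suc (Suc n))) y = 2 * y * poly (cheb (Suc n)) y - poly (cheb n) y"
      by simp
    also have "\<dots> = 2 * y * ((r^Suc n + s^Suc n)/2) - (r^n + s^n)/2"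
      by (simp only: 3)
    also have "\<dots> = ((r + s) * (r^Suc n + s^Suc n) - r * s * (r^n + s^n)) / 2"
      by (simp only: rps rs) (simp add: field_simps)
    also have "\<dots> = (r^Suc (Suc n) + s^Suc (Suc n)) / 2"
      by (simp add: algebra_simps)
    finally show ?case .
  qed
qed

lemma cheb_bound:
  fixes y :: real
  assumes "y \<ge> 1"
  shows "\<bar>poly (cheb n) y\<bar> \<le> (y + sqrt (y^2 - 1)) ^ n"
proof -
  define r where "r = y + sqrt (y^2 - 1)"
  define s where "s = y - sqrt (y^2 - 1)"
  have y2: "1 \<le> y^2" using assms by (simp add: one_le_power)
  have "sqrt (y^2-1) \<le> sqrt (y^2)" by (rule real_sqrt_le_mono) simp
  then have s0: "s \<ge> 0" unfolding s_def using assms by simp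
  have sr: "s \<le> r" unfolding r_def s_def using y2 by simp
  have "s^n \<le> r^n" using s0 sr by (simp add: power_mono)
  moreover have "s^n \<ge> 0" using s0 by simp
  ultimately have "\<bar>(r^n + s^n) / 2\<bar> \<le> r^n" by simp
  then show ?thesis using cheb_closed[OF assms, of n] unfolding r_def s_def by simp
qed



lemma cheb_node_mono:
  fixes N i j :: nat
  assumes "i < j" "j \<le> N"
  shows "cos (real j * pi / real N) < cos (real i * pi / real N)"
proof (rule cos_monotone_0_pi)
  have N: "real N > 0" using assms by simp
  show "0 \<le> real i * pi / real N" by simp
  show "real i * pi / real N < real j * pi / real N"
    using assms N by (simp add: divide_strict_right_mono)
  show "real j * pi / real N \<le> pi"
    using assms N by (simp add: field_simps)
qed

lemma cheb_nodes_sum: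
  fixes N :: nat and y :: real
  assumes y1: "y \<ge> 1"
  shows "(\<Sum>i\<le>N. \<bar>\<Prod>j\<in>{..N}-{i}. (y - cos (real j * pi / real N)) / (cos (real i * pi / real N) - cos (real j * pi / real N))\<bar>)
          \<le> (y + sqrt (y^2 - 1)) ^ N"
proof -
  define c where "c j = cos (real j * pi / real N)" for j
  define l where "l i = (\<Prod>j\<in>{..N}-{i}. (y - c j) / (c i - c j))" for i
  have inj: "inj_on c {..N}"
  proof (rule inj_onI)
    fix i j assume "i \<in> {..N}" "j \<in> {..N}" "c i = c j"
    then show "i = j" unfolding c_def
      by (metis atMost_iff cheb_node_mono less_irrefl nat_neq_iff)
  qed
  have nodeval: "poly (cheb N) (c i) = (-1)^i" if "i \<le> N" for i
  proof (cases "N = 0")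
    case True then show ?thesis using that by (simp add: c_def)
  next
    case False
    then have "real N * (real i * pi / real N) = real i * pi" by simp
    then show ?thesis unfolding c_def cheb_cos by simp
  qed
  have interp: "poly (cheb N) y = (\<Sum>i\<le>N. (-1)^i * l i)"
    unfolding l_def
    using lagrange_interp_idx[of "{..N}" c "cheb N" y] inj degree_cheb[of N] nodeval
    by (simp add: le_imp_less_Suc)
  have sign: "(-1)^i * l i \<ge> 0" if iN: "i \<le> N" for i
  proof -
    define f where "f j = (y - c j) / (c i - c j)" for j
    have c1: "c j \<le> 1" for j unfolding c_def by simp
    have split: "{..N}-{i} = {..<i} \<union> {i<..N}" using iN by auto
    have "l i = (\<Prod>j\<in>{..<i}. f j) * (\<Prod>j\<in>{i<..N}. f j)"
      unfolding l_def f_def[symmetric] split by (subst prod.union_disjoint) auto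
    also have "(\<Prod>j\<in>{..<i}. f j) = (\<Prod>j\<in>{..<i}. - (- f j))" by simp
    also have "\<dots> = (-1)^i * (\<Prod>j\<in>{..<i}. - f j)" by (subst prod_uminus) simp
    finally have li: "l i = (-1)^i * (\<Prod>j\<in>{..<i}. - f j) * (\<Prod>j\<in>{i<..N}. f j)" .
    have "(\<Prod>j\<in>{..<i}. - f j) \<ge> 0"
    proof (rule prod_nonneg)
      fix j assume "j \<in> {..<i}"
      then have "c i < c j" unfolding c_def using iN cheb_node_mono by simp
      moreover have "y - c j \<ge> 0" using c1[of j] y1 by simp
      ultimately show "0 \<le> - f j" unfolding f_def by (simp add: divide_nonneg_neg)
    qed
    moreover have "(\<Prod>j\<in>{i<..N}. f j) \<ge> 0"
    proof (rule prod_nonneg)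
      fix j assume "j \<in> {i<..N}"
      then have "c j < c i" unfolding c_def using cheb_node_mono by simp
      moreover have "y - c j \<ge> 0" using c1[of j] y1 by simp
      ultimately show "0 \<le> f j" unfolding f_def by simp
    qed
    ultimately show ?thesis unfolding li
      by (simp add: mult.assoc[symmetric] power_add[symmetric] mult_nonneg_nonneg)
  qed
  have "(\<Sum>i\<le>N. \<bar>l i\<bar>) = (\<Sum>i\<le>N. (-1)^i * l i)"
  proof (rule sum.cong[OF refl])
    fix i assume "i \<in> {..N}"
    then have s: "(-1)^i * l i \<ge> 0" using sign by simp
    have "\<bar>l i\<bar> = \<bar>(-1)^i * l i\<bar>" by (simp add: abs_mult)
    then show "\<bar>l i\<bar> = (-1)^i * l i" using s by simp
  qed
  also have "\<dots> = poly (cheb N) y" using interp by simp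
  also have "\<dots> \<le> (y + sqrt (y^2 - 1)) ^ N" using cheb_bound[OF y1, of N] by simp
  finally show ?thesis unfolding l_def c_def .
qed



lemma prod_lessThan_diff_fact: "(\<Prod>j<i. real i - real j) = fact i"
proof (induction i)
  case (Suc i)
  have "(\<Prod>j<Suc i. real (Suc i) - real j) = (real (Suc i) - real 0) * (\<Prod>j<i. real (Suc i) - real (Suc j))"
    by (rule prod.lessThan_Suc_shift)
  also have "(\<Prod>j<i. real (Suc i) - real (Suc j)) = (\<Prod>j<i. real i - real j)" by simp
  finally show ?case using Suc by simp
qed simp

lemma prod_dist_fact:
  assumes "i \<le> k"
  shows "(\<Prod>j\<in>{..k}-{i}. \<bar>real i - real j\<bar>) = fact i * fact (k - i)"
  using assms
proof (induction k)
  case 0 then show ?case by simp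
next
  case (Suc k)
  show ?case
  proof (cases "i = Suc k")
    case True
    have "{..Suc k}-{i} = {..<i}" using True by auto
    moreover have "(\<Prod>j<i. \<bar>real i - real j\<bar>) = (\<Prod>j<i. real i - real j)"
      by (rule prod.cong) auto
    ultimately show ?thesis using True prod_lessThan_diff_fact[of i] by simp
  next
    case False
    then have ik: "i \<le> k" using Suc.prems by simp
    have e: "{..Suc k}-{i} = insert (Suc k) ({..k}-{i})" using ik by auto
    have "(\<Prod>j\<in>{..Suc k}-{i}. \<bar>real i - real j\<bar>) = \<bar>real i - real (Suc k)\<bar> * (\<Prod>j\<in>{..k}-{i}. \<bar>real i - real j\<bar>)"
      unfolding e by (subst prod.insert) auto
    also have "\<dots> = real (Suc k - i) * (fact i * fact (k - i))"
      using Suc.IH[OF ik] ik by (simp add: of_nat_diff)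
    also have "\<dots> = fact i * fact (Suc k - i)"
      using ik by (simp add: Suc_diff_le fact_Suc algebra_simps)
    finally show ?thesis .
  qed
qed

lemma sum_inv_fact_binom: "(\<Sum>i\<le>k. 1 / (fact i * fact (k - i) :: real)) = 2^k / fact k"
proof -
  have "(\<Sum>i\<le>k. 1 / (fact i * fact (k - i) :: real)) = (\<Sum>i\<le>k. real (k choose i) / fact k)"
  proof (rule sum.cong[OF refl])
    fix i assume "i \<in> {..k}"
    then have "real (k choose i) = fact k / (fact i * fact (k - i))"
      by (simp add: binomial_fact)
    then show "1 / (fact i * fact (k - i) :: real) = real (k choose i) / fact k"
      by simp
  qed
  also have "\<dots> = real (\<Sum>i\<le>k. k choose i) / fact k"
    by (simp add: sum_divide_distrib)
  also have "\<dots> = 2^k / fact k" by (simp add: choose_row_sum)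
  finally show ?thesis .
qed

lemma enode_sum_bound:
  fixes xs :: "nat \<Rightarrow> real" and x a b h :: real
  assumes xs: "\<And>i. i \<le> k \<Longrightarrow> xs i \<in> {a..b}" and x: "x \<in> {a..b}"
    and gaps: "\<And>i j. i \<le> k \<Longrightarrow> j \<le> k \<Longrightarrow> \<bar>xs i - xs j\<bar> \<ge> \<bar>real i - real j\<bar> * h"
    and h: "h > 0"
  shows "(\<Sum>i\<le>k. \<Prod>j\<in>{..k}-{i}. \<bar>x - xs j\<bar> / \<bar>xs i - xs j\<bar>) \<le> ((b - a) / h)^k * 2^k / fact k"
proof -
  have "(\<Prod>j\<in>{..k}-{i}. \<bar>x - xs j\<bar> / \<bar>xs i - xs j\<bar>) \<le> (\<Prod>j\<in>{..k}-{i}. ((b - a) / h) / \<bar>real i - real j\<bar>)"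
    if i: "i \<le> k" for i
  proof (rule prod_mono)
    fix j assume j: "j \<in> {..k}-{i}"
    then have ij: "\<bar>real i - real j\<bar> \<ge> 1" by auto
    have g: "\<bar>xs i - xs j\<bar> \<ge> \<bar>real i - real j\<bar> * h" using gaps i j by auto
    have pos: "\<bar>real i - real j\<bar> * h > 0" using ij h by simp
    have num: "\<bar>x - xs j\<bar> \<le> b - a" using xs[of j] x j by auto
    have "\<bar>x - xs j\<bar> / \<bar>xs i - xs j\<bar> \<le> (b - a) / (\<bar>real i - real j\<bar> * h)"
      by (rule frac_le) (use num g pos in auto)
    also have "\<dots> = ((b - a) / h) / \<bar>real i - real j\<bar>" by simp
    finally show "0 \<le> \<bar>x - xs j\<bar> / \<bar>xs i - xs j\<bar> \<and> \<bar>x - xs j\<bar> / \<bar>xs i - xs j\<bar> \<le> ((b - a) / h) / \<bar>real i - real j\<bar>"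
      by simp
  qed
  then have "(\<Sum>i\<le>k. \<Prod>j\<in>{..k}-{i}. \<bar>x - xs j\<bar> / \<bar>xs i - xs j\<bar>) \<le> (\<Sum>i\<le>k. \<Prod>j\<in>{..k}-{i}. ((b - a) / h) / \<bar>real i - real j\<bar>)"
    by (intro sum_mono) auto
  also have "\<dots> = (\<Sum>i\<le>k. ((b - a) / h)^k * (1 / (fact i * fact (k - i))))"
  proof (rule sum.cong[OF refl])
    fix i assume i: "i \<in> {..k}"
    have "(\<Prod>j\<in>{..k}-{i}. ((b - a) / h) / \<bar>real i - real j\<bar>) = ((b - a) / h) ^ card ({..k}-{i}) / (\<Prod>j\<in>{..k}-{i}. \<bar>real i - real j\<bar>)"
      by (simp only: prod_dividef prod_constant power_divide)
    also have "card ({..k}-{i}) = k" using i by simp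
    finally show "(\<Prod>j\<in>{..k}-{i}. ((b - a) / h) / \<bar>real i - real j\<bar>) = ((b - a) / h)^k * (1 / (fact i * fact (k - i)))"
      using prod_dist_fact[of i k] i by simp
  qed
  also have "\<dots> = ((b - a) / h)^k * (2^k / fact k)"
    by (simp only: sum_distrib_left[symmetric] sum_inv_fact_binom)
  finally show ?thesis by simp
qed



lemma interp_bound:
  fixes P :: "real poly" and n k :: nat and a b h d ctr \<sigma> M x :: real and xs :: "nat \<Rightarrow> real"
  assumes degP: "degree P \<le> n" and kn: "k \<le> n"
    and xs: "\<And>i. i \<le> k \<Longrightarrow> xs i \<in> {a..b}"
    and gaps: "\<And>i j. i \<le> k \<Longrightarrow> j \<le> k \<Longrightarrow> \<bar>xs i - xs j\<bar> \<ge> \<bar>real i - real j\<bar> * h"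
    and h: "h > 0"
    and PE: "\<And>i. i \<le> k \<Longrightarrow> \<bar>poly P (xs i)\<bar> \<le> M"
    and sg: "\<bar>\<sigma>\<bar> = 1" and d: "d > 0"
    and dist: "\<And>y z. y \<in> {ctr - 1/4..ctr + 1/4} \<Longrightarrow> z \<in> {a..b} \<Longrightarrow> \<bar>y - z\<bar> \<ge> d"
    and PF: "\<And>y. y \<in> {ctr - 1/4..ctr + 1/4} \<Longrightarrow> \<bar>poly P y\<bar> \<le> 1"
    and x: "x \<in> {a..b}" and xt: "4 * \<sigma> * (x - ctr) \<ge> 1"
  shows "\<bar>poly P x\<bar> \<le> M * (((b - a) / h)^k * 2^k / fact k) * (1 + (b - a) / d)^(n - k)
     + (if k < n then ((b - a) / d)^(k+1) * (4*\<sigma>*(x-ctr) + sqrt ((4*\<sigma>*(x-ctr))^2 - 1))^(n - k - 1) else 0)"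
proof -
  define N where "N = n - k - 1"
  define c where "c j = cos (real j * pi / real N)" for j
  define y where "y j = ctr + \<sigma> * c j / 4" for j
  define z where "z i = (if i \<le> k then xs i else y (i - Suc k))" for i
  define X where "X = 4 * \<sigma> * (x - ctr)"
  define l where "l i = (\<Prod>j\<in>{..n}-{i}. (x - z j) / (z i - z j))" for i
  have M0: "M \<ge> 0" using PE[of 0] by (meson abs_ge_zero order_trans zero_le)
  have sg': "\<sigma> = 1 \<or> \<sigma> = -1" using sg by auto
  have yF: "y j \<in> {ctr - 1/4..ctr + 1/4}" for j
  proof -
    have "\<bar>\<sigma> * c j\<bar> \<le> 1" unfolding c_def using sg by (simp add: abs_mult)
    then show ?thesis unfolding y_def by auto
  qed
  have cinj: "c i = c j \<Longrightarrow> i \<le> N \<Longrightarrow> j \<le> N \<Longrightarrow> i = j" for i j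
    unfolding c_def by (metis cheb_node_mono less_irrefl nat_neq_iff)
  have inj: "inj_on z {..n}"
  proof (rule inj_onI)
    fix i j assume i: "i \<in> {..n}" and j: "j \<in> {..n}" and e: "z i = z j"
    show "i = j"
    proof (cases "i \<le> k"; cases "j \<le> k")
      assume ik: "i \<le> k" and jk: "j \<le> k"
      then have "\<bar>real i - real j\<bar> * h \<le> 0" using gaps[OF ik jk] e by (simp add: z_def)
      then show "i = j" using h by (simp add: mult_le_0_iff)
    next
      assume ik: "i \<le> k" and jk: "\<not> j \<le> k"
      then have "\<bar>y (j - Suc k) - xs i\<bar> \<ge> d" using dist[OF yF xs[OF ik]] by simp
      then show "i = j" using e ik jk d by (simp add: z_def)
    next
      assume ik: "\<not> i \<le> k" and jk: "j \<le> k"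
      then have "\<bar>y (i - Suc k) - xs j\<bar> \<ge> d" using dist[OF yF xs[OF jk]] by simp
      then show "i = j" using e ik jk d by (simp add: z_def)
    next
      assume ik: "\<not> i \<le> k" and jk: "\<not> j \<le> k"
      then have "y (i - Suc k) = y (j - Suc k)" using e by (simp add: z_def)
      then have "c (i - Suc k) = c (j - Suc k)" using sg' unfolding y_def by auto
      then have "i - Suc k = j - Suc k" using cinj i j unfolding N_def by auto
      then show "i = j" using ik jk by simp
    qed
  qed
  have interp: "poly P x = (\<Sum>i\<le>n. poly P (z i) * l i)"
    unfolding l_def by (rule lagrange_interp_idx) (use inj degP in auto)
  have "\<bar>poly P x\<bar> \<le> (\<Sum>i\<le>n. \<bar>poly P (z i)\<bar> * \<bar>l i\<bar>)"
    unfolding interp by (rule order_trans[OF sum_abs]) (simp add: abs_mult)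
  also have "\<dots> = (\<Sum>i\<le>k. \<bar>poly P (z i)\<bar> * \<bar>l i\<bar>) + (\<Sum>i\<in>{k<..n}. \<bar>poly P (z i)\<bar> * \<bar>l i\<bar>)"
  proof -
    have e: "{..n} = {..k} \<union> {k<..n}" using kn by auto
    show ?thesis unfolding e by (rule sum.union_disjoint) auto
  qed
  also have "(\<Sum>i\<le>k. \<bar>poly P (z i)\<bar> * \<bar>l i\<bar>) \<le> M * (((b - a) / h)^k * 2^k / fact k) * (1 + (b - a) / d)^(n - k)"
  proof -
    define B where "B = (1 + (b - a) / d)^(n - k)"
    have ab: "a \<le> b" using x by simp
    have B0: "B \<ge> 0" unfolding B_def using ab d by simp
    have "\<bar>poly P (z i)\<bar> * \<bar>l i\<bar> \<le> M * ((\<Prod>j\<in>{..k}-{i}. \<bar>x - xs j\<bar> / \<bar>xs i - xs j\<bar>) * B)"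
      if i: "i \<le> k" for i
    proof -
      have spl: "{..n}-{i} = ({..k}-{i}) \<union> {k<..n}" using i kn by auto
      have "\<bar>l i\<bar> = (\<Prod>j\<in>{..n}-{i}. \<bar>x - z j\<bar> / \<bar>z i - z j\<bar>)"
        unfolding l_def by (simp add: abs_prod abs_divide)
      also have "\<dots> = (\<Prod>j\<in>{..k}-{i}. \<bar>x - z j\<bar> / \<bar>z i - z j\<bar>) * (\<Prod>j\<in>{k<..n}. \<bar>x - z j\<bar> / \<bar>z i - z j\<bar>)"
        unfolding spl by (subst prod.union_disjoint) auto
      also have "(\<Prod>j\<in>{..k}-{i}. \<bar>x - z j\<bar> / \<bar>z i - z j\<bar>) = (\<Prod>j\<in>{..k}-{i}. \<bar>x - xs j\<bar> / \<bar>xs i - xs j\<bar>)"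
        using i by (intro prod.cong) (auto simp: z_def)
      also have "(\<Prod>j\<in>{k<..n}. \<bar>x - z j\<bar> / \<bar>z i - z j\<bar>) \<le> (\<Prod>j\<in>{k<..n}. 1 + (b - a) / d)"
      proof (rule prod_mono)
        fix j assume j: "j \<in> {k<..n}"
        have zj: "z j = y (j - Suc k)" using j by (simp add: z_def)
        have zi: "z i = xs i" using i by (simp add: z_def)
        have dd: "\<bar>z i - z j\<bar> \<ge> d" using dist[OF yF xs[OF i]] zi zj by (simp add: abs_minus_commute)
        have xx: "\<bar>x - xs i\<bar> \<le> b - a" using x xs[OF i] by auto
        have "\<bar>x - z j\<bar> \<le> \<bar>z i - z j\<bar> + (b - a)" using xx zi by linarith
        then have "\<bar>x - z j\<bar> / \<bar>z i - z j\<bar> \<le> (\<bar>z i - z j\<bar> + (b - a)) / \<bar>z i - z j\<bar>"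
          using dd d by (simp add: divide_right_mono)
        also have "\<dots> = 1 + (b - a) / \<bar>z i - z j\<bar>" using dd d by (simp add: field_simps)
        also have "\<dots> \<le> 1 + (b - a) / d" using dd d ab by (simp add: frac_le)
        finally show "0 \<le> \<bar>x - z j\<bar> / \<bar>z i - z j\<bar> \<and> \<bar>x - z j\<bar> / \<bar>z i - z j\<bar> \<le> 1 + (b - a) / d" by simp
      qed
      also have "(\<Prod>j\<in>{k<..n}. 1 + (b - a) / d) = B" unfolding B_def by simp
      finally have li: "\<bar>l i\<bar> \<le> (\<Prod>j\<in>{..k}-{i}. \<bar>x - xs j\<bar> / \<bar>xs i - xs j\<bar>) * B"
        by (simp add: mult_left_mono prod_nonneg)
      have "\<bar>poly P (z i)\<bar> \<le> M" using PE[OF i] i by (simp add: z_def)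
      then show ?thesis using li by (simp add: mult_mono)
    qed
    then have "(\<Sum>i\<le>k. \<bar>poly P (z i)\<bar> * \<bar>l i\<bar>) \<le> (\<Sum>i\<le>k. M * ((\<Prod>j\<in>{..k}-{i}. \<bar>x - xs j\<bar> / \<bar>xs i - xs j\<bar>) * B))"
      by (intro sum_mono) auto
    also have "\<dots> = M * B * (\<Sum>i\<le>k. \<Prod>j\<in>{..k}-{i}. \<bar>x - xs j\<bar> / \<bar>xs i - xs j\<bar>)"
      by (simp add: sum_distrib_left sum_distrib_right algebra_simps)
    also have "\<dots> \<le> M * B * (((b - a) / h)^k * 2^k / fact k)"
      by (rule mult_left_mono[OF enode_sum_bound[OF xs x gaps h]]) (use M0 B0 in auto)
    finally show ?thesis unfolding B_def by (simp add: algebra_simps)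
  qed
  also have "(\<Sum>i\<in>{k<..n}. \<bar>poly P (z i)\<bar> * \<bar>l i\<bar>) \<le>
      (if k < n then ((b - a) / d)^(k+1) * (X + sqrt (X^2 - 1))^(n - k - 1) else 0)"
  proof (cases "k < n")
    case False
    then show ?thesis using kn by simp
  next
    case True
    have nk: "n - k - 1 = N" "n = k + 1 + N" using True unfolding N_def by auto
    have X1: "X \<ge> 1" using xt unfolding X_def .
    have ab: "a \<le> b" using x by simp
    define G where "G i' = \<bar>\<Prod>j'\<in>{..N}-{i'}. (X - c j') / (c i' - c j')\<bar>" for i'
    have ratio: "(x - y j) / (y i - y j) = (X - c j) / (c i - c j)" for i j
    proof -
      have h1: "x - y j = \<sigma> * (X - c j) / 4" and h2: "y i - y j = \<sigma> * (c i - c j) / 4"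
        using sg' unfolding X_def y_def by (auto simp: algebra_simps)
      have s0: "\<sigma> \<noteq> 0" using sg' by auto
      show ?thesis unfolding h1 h2 using s0 by simp
    qed
    have trm: "\<bar>poly P (z i)\<bar> * \<bar>l i\<bar> \<le> ((b - a) / d)^(k+1) * G (i - Suc k)" if i: "i \<in> {k<..n}" for i
    proof -
      define i' where "i' = i - Suc k"
      have i'N: "i' \<le> N" using i unfolding i'_def N_def by auto
      have ii: "i = i' + Suc k" using i unfolding i'_def by auto
      have zi: "z i = y i'" using i unfolding z_def i'_def by simp
      have spl: "{..n}-{i} = {..k} \<union> ({k<..n}-{i})" using i by auto
      have img: "{k<..n}-{i} = (\<lambda>j'. j' + Suc k) ` ({..N}-{i'})"
      proof -
        have "{k<..n}-{i} \<subseteq> (\<lambda>j'. j' + Suc k) ` ({..N}-{i'})"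
        proof
          fix j assume j: "j \<in> {k<..n}-{i}"
          then have "j = (j - Suc k) + Suc k" "j - Suc k \<in> {..N}-{i'}" using nk ii by auto
          then show "j \<in> (\<lambda>j'. j' + Suc k) ` ({..N}-{i'})" by blast
        qed
        moreover have "(\<lambda>j'. j' + Suc k) ` ({..N}-{i'}) \<subseteq> {k<..n}-{i}" using nk ii by auto
        ultimately show ?thesis by blast
      qed
      have "\<bar>l i\<bar> = (\<Prod>j\<in>{..k}. \<bar>x - z j\<bar> / \<bar>z i - z j\<bar>) * \<bar>\<Prod>j\<in>{k<..n}-{i}. (x - z j) / (z i - z j)\<bar>"
        unfolding l_def spl by (subst prod.union_disjoint) (auto simp: abs_mult abs_prod abs_divide)
      also have "\<bar>\<Prod>j\<in>{k<..n}-{i}. (x - z j) / (z i - z j)\<bar> = G i'"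
      proof -
        have "(\<Prod>j\<in>{k<..n}-{i}. (x - z j) / (z i - z j)) = (\<Prod>j'\<in>{..N}-{i'}. (x - z (j' + Suc k)) / (z i - z (j' + Suc k)))"
          unfolding img by (subst prod.reindex) (auto simp: inj_on_def)
        also have "\<dots> = (\<Prod>j'\<in>{..N}-{i'}. (X - c j') / (c i' - c j'))"
        proof (intro prod.cong refl)
          fix j' assume "j' \<in> {..N}-{i'}"
          have zj': "z (j' + Suc k) = y j'" by (simp add: z_def)
          show "(x - z (j' + Suc k)) / (z i - z (j' + Suc k)) = (X - c j') / (c i' - c j')"
            by (simp only: zi zj' ratio)
        qed
        finally show ?thesis unfolding G_def by simp
      qed
      also have "(\<Prod>j\<in>{..k}. \<bar>x - z j\<bar> / \<bar>z i - z j\<bar>) \<le> (\<Prod>j\<in>{..k}. (b - a) / d)"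
      proof (rule prod_mono)
        fix j assume j: "j \<in> {..k}"
        have zj: "z j = xs j" using j by (simp add: z_def)
        have dd: "\<bar>z i - z j\<bar> \<ge> d" using dist[OF yF xs] j zi zj by auto
        have xx: "\<bar>x - z j\<bar> \<le> b - a" using x xs[of j] j zj by auto
        have "\<bar>x - z j\<bar> / \<bar>z i - z j\<bar> \<le> (b - a) / d"
          by (rule frac_le) (use xx dd d ab in auto)
        then show "0 \<le> \<bar>x - z j\<bar> / \<bar>z i - z j\<bar> \<and> \<bar>x - z j\<bar> / \<bar>z i - z j\<bar> \<le> (b - a) / d" by simp
      qed
      also have "(\<Prod>j\<in>{..k}. (b - a) / d) = ((b - a) / d)^(k+1)" by simp
      finally have li: "\<bar>l i\<bar> \<le> ((b - a) / d)^(k+1) * G i'"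
        by (simp add: mult_right_mono G_def)
      have "\<bar>poly P (z i)\<bar> \<le> 1" using PF[OF yF] zi by simp
      then have "\<bar>poly P (z i)\<bar> * \<bar>l i\<bar> \<le> 1 * \<bar>l i\<bar>" by (rule mult_right_mono) simp
      then show ?thesis using li unfolding i'_def by simp
    qed
    have "(\<Sum>i\<in>{k<..n}. \<bar>poly P (z i)\<bar> * \<bar>l i\<bar>) \<le> (\<Sum>i\<in>{k<..n}. ((b - a) / d)^(k+1) * G (i - Suc k))"
      by (rule sum_mono) (rule trm)
    also have "\<dots> = ((b - a) / d)^(k+1) * (\<Sum>i'\<le>N. G i')"
    proof -
      have img: "{k<..n} = (\<lambda>j'. j' + Suc k) ` {..N}"
      proof -
        have "{k<..n} \<subseteq> (\<lambda>j'. j' + Suc k) ` {..N}"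
        proof
          fix j assume j: "j \<in> {k<..n}"
          then have "j = (j - Suc k) + Suc k" "j - Suc k \<in> {..N}" using nk by auto
          then show "j \<in> (\<lambda>j'. j' + Suc k) ` {..N}" by blast
        qed
        moreover have "(\<lambda>j'. j' + Suc k) ` {..N} \<subseteq> {k<..n}" using nk by auto
        ultimately show ?thesis by blast
      qed
      show ?thesis unfolding img by (subst sum.reindex) (auto simp: inj_on_def sum_distrib_left)
    qed
    also have "\<dots> \<le> ((b - a) / d)^(k+1) * (X + sqrt (X^2 - 1))^N"
      by (rule mult_left_mono) (use cheb_nodes_sum[OF X1, of N] ab d in \<open>auto simp: G_def c_def\<close>)
    finally show ?thesis using True nk by simp
  qed
  finally show ?thesis unfolding X_def by simp
qed



lemma Ioc_lmeasurable: "{s<..(t::real)} \<in> lmeasurable"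
  by (rule fmeasurableI2[of "{s..t}"]) auto

lemma G_lip:
  fixes E :: "real set"
  assumes E: "E \<in> lmeasurable" and st: "s \<le> t"
  shows "measure lebesgue (E \<inter> {..s}) \<le> measure lebesgue (E \<inter> {..t})"
    and "measure lebesgue (E \<inter> {..t}) \<le> measure lebesgue (E \<inter> {..s}) + (t - s)"
proof -
  have Em: "E \<in> sets lebesgue" using E by (simp add: fmeasurable_def)
  have A: "E \<inter> {..s} \<in> lmeasurable" by (rule fmeasurableI2[OF E]) (use Em in auto)
  have B: "E \<inter> {s<..t} \<in> lmeasurable" by (rule fmeasurableI2[OF E]) (use Em in auto)
  have U: "E \<inter> {..t} = (E \<inter> {..s}) \<union> (E \<inter> {s<..t})" using st by auto
  have eq: "measure lebesgue (E \<inter> {..t}) = measure lebesgue (E \<inter> {..s}) + measure lebesgue (E \<inter> {s<..t})"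
    unfolding U by (rule measure_Union) (use A B in \<open>auto simp: fmeasurable_def\<close>)
  have "measure lebesgue (E \<inter> {s<..t}) \<le> measure lebesgue {s<..t}"
    by (rule measure_mono_fmeasurable) (use Em Ioc_lmeasurable in auto)
  then have le: "measure lebesgue (E \<inter> {s<..t}) \<le> t - s" using st by simp
  show "measure lebesgue (E \<inter> {..s}) \<le> measure lebesgue (E \<inter> {..t})" using eq by simp
  show "measure lebesgue (E \<inter> {..t}) \<le> measure lebesgue (E \<inter> {..s}) + (t - s)" using eq le by simp
qed

lemma level_point:
  fixes E :: "real set"
  assumes E: "E \<in> lmeasurable" and Eab: "E \<subseteq> {a..b}"
    and v: "0 < v" "v \<le> measure lebesgue E"
  shows "\<exists>t. measure lebesgue (E \<inter> {..t}) = v \<and> t \<in> closure E"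
proof -
  define G where "G t = measure lebesgue (E \<inter> {..t})" for t
  have Em: "E \<in> sets lebesgue" using E by (simp add: fmeasurable_def)
  have mono: "s \<le> t \<Longrightarrow> G s \<le> G t" for s t unfolding G_def by (rule G_lip(1)[OF E])
  have lip: "s \<le> t \<Longrightarrow> G t \<le> G s + (t - s)" for s t unfolding G_def by (rule G_lip(2)[OF E])
  have Glow: "t < a \<Longrightarrow> G t = 0" for t
  proof -
    assume "t < a"
    then have "E \<inter> {..t} = {}" using Eab by auto
    then show "G t = 0" unfolding G_def by simp
  qed
  have Gb: "G b = measure lebesgue E"
  proof -
    have "E \<inter> {..b} = E" using Eab by auto
    then show ?thesis unfolding G_def by simp
  qed
  define S where "S = {t. G t \<ge> v}"
  define t0 where "t0 = Inf S"
  have bS: "b \<in> S" unfolding S_def using Gb v by simp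
  have lowS: "s \<in> S \<Longrightarrow> a \<le> s" for s
  proof (rule ccontr)
    assume "s \<in> S" "\<not> a \<le> s"
    then have "G s = 0" "G s \<ge> v" using Glow unfolding S_def by auto
    then show False using v by simp
  qed
  have bdd: "bdd_below S" unfolding bdd_below_def using lowS by blast
  have t0le: "s \<in> S \<Longrightarrow> t0 \<le> s" for s unfolding t0_def using bdd by (simp add: cInf_lower)
  have ge: "G t0 \<ge> v"
  proof (rule field_le_epsilon)
    fix e :: real assume e: "e > 0"
    obtain s where s: "s \<in> S" "s < t0 + e"
      using cInf_lessD[of S "t0 + e"] bS e unfolding t0_def by auto
    have "t0 \<le> s" using t0le s(1) .
    then have "G s \<le> G t0 + (s - t0)" by (rule lip)
    moreover have "G s \<ge> v" using s(1) unfolding S_def by simp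
    ultimately show "v \<le> G t0 + e" using s(2) by linarith
  qed
  have below: "t < t0 \<Longrightarrow> G t < v" for t
  proof (rule ccontr)
    assume "t < t0" "\<not> G t < v"
    then have "t \<in> S" unfolding S_def by simp
    then have "t0 \<le> t" by (rule t0le)
    then show False using \<open>t < t0\<close> by simp
  qed
  have le: "G t0 \<le> v"
  proof (rule field_le_epsilon)
    fix e :: real assume e: "e > 0"
    have "G t0 \<le> G (t0 - e) + e" using lip[of "t0 - e" t0] e by simp
    moreover have "G (t0 - e) < v" using below e by simp
    ultimately show "G t0 \<le> v + e" by simp
  qed
  have cl: "t0 \<in> closure E"
  proof (subst closure_approachable, intro allI impI)
    fix e :: real assume e: "e > 0"
    have "G (t0 - e/2) < G t0" using below[of "t0 - e/2"] e ge by simp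
    then have "E \<inter> {..t0} \<noteq> E \<inter> {..t0 - e/2}" unfolding G_def by auto
    moreover have "E \<inter> {..t0 - e/2} \<subseteq> E \<inter> {..t0}" using e by auto
    ultimately obtain y where y: "y \<in> E" "y \<le> t0" "\<not> y \<le> t0 - e/2" by blast
    then have "dist y t0 < e" using e by (simp add: dist_real_def)
    then show "\<exists>y\<in>E. dist y t0 < e" using y by blast
  qed
  show ?thesis using ge le cl unfolding G_def by (intro exI[of _ t0]) auto
qed

lemma node_select:
  fixes E :: "real set" and k :: nat
  assumes E: "E \<in> lmeasurable" and Eab: "E \<subseteq> {a..b}" and m: "measure lebesgue E > 0"
  shows "\<exists>xs. (\<forall>i\<le>k. xs i \<in> closure E) \<and>
     (\<forall>i\<le>k. \<forall>j\<le>k. \<bar>xs i - xs j\<bar> \<ge> \<bar>real i - real j\<bar> * (measure lebesgue E / real (Suc k)))"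
proof -
  define m where "m = measure lebesgue E"
  define G where "G t = measure lebesgue (E \<inter> {..t})" for t
  define v where "v i = real (Suc i) * (m / real (Suc k))" for i
  have "\<forall>i. \<exists>t. i \<le> k \<longrightarrow> G t = v i \<and> t \<in> closure E"
  proof
    fix i
    show "\<exists>t. i \<le> k \<longrightarrow> G t = v i \<and> t \<in> closure E"
    proof (cases "i \<le> k")
      case True
      have "0 < v i" unfolding v_def using m by (simp add: m_def)
      moreover have "v i \<le> m"
      proof -
        have "real (Suc i) / real (Suc k) \<le> 1" using True by simp
        then have "real (Suc i) / real (Suc k) * m \<le> 1 * m" using m
          by (intro mult_right_mono) (auto simp: m_def)
        then show ?thesis unfolding v_def by (simp add: field_simps)
      qed
      ultimately show ?thesis using level_point[OF E Eab, of "v i"] unfolding G_def m_def by auto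
    qed simp
  qed
  then obtain xs where xs: "\<And>i. i \<le> k \<Longrightarrow> G (xs i) = v i \<and> xs i \<in> closure E" by metis
  have gap: "\<bar>xs i - xs j\<bar> \<ge> \<bar>real i - real j\<bar> * (m / real (Suc k))" if ij: "i \<le> k" "j \<le> k" for i j
  proof -
    have "\<bar>G (xs i) - G (xs j)\<bar> \<le> \<bar>xs i - xs j\<bar>"
    proof (cases "xs i \<le> xs j")
      case True
      then show ?thesis using G_lip[OF E True] unfolding G_def by auto
    next
      case False
      then have "xs j \<le> xs i" by simp
      then show ?thesis using G_lip[OF E, of "xs j" "xs i"] unfolding G_def by auto
    qed
    moreover have "G (xs i) - G (xs j) = (real i - real j) * (m / real (Suc k))"
      using xs[OF ij(1)] xs[OF ij(2)] unfolding v_def by (simp add: field_simps)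
    moreover have "m \<ge> 0" using m by (simp add: m_def)
    ultimately show ?thesis by (simp add: abs_mult)
  qed
  show ?thesis using xs gap unfolding m_def by blast
qed



lemma regime1:
  fixes \<delta> \<delta>0 c \<epsilon> u g \<eta> K :: real and n :: nat
  assumes n1: "n \<ge> 1" and AK: "\<delta> * real n \<le> K" and dd: "\<delta>0 \<le> \<delta>" and d0: "0 < \<delta>0"
    and c0: "0 \<le> c" and eps: "0 < \<epsilon>" "\<epsilon> \<le> 1 - c"
    and u: "0 \<le> u" "u \<le> \<eta>" and g: "0 \<le> g" "g \<le> \<eta>"
    and e1: "(K / \<delta>0) * \<eta> \<le> 1/2" and e2: "2 * (K / \<delta>0 + 1) * \<eta> \<le> exp (-K) * \<epsilon> * \<delta>0"
  shows "exp (-\<delta> * real n) * exp (real n * u) + u * exp (real n * g) \<le> exp (-c * \<delta> * real n)"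
proof -
  define A where "A = \<delta> * real n"
  define N0 where "N0 = K / \<delta>0"
  have A0: "A \<ge> \<delta>0"
  proof -
    have "\<delta> * 1 \<le> \<delta> * real n" using n1 dd d0 by (intro mult_left_mono) auto
    then show ?thesis unfolding A_def using dd by simp
  qed
  have nN0: "real n \<le> N0"
  proof -
    have "\<delta>0 * real n \<le> \<delta> * real n" using dd by (simp add: mult_right_mono)
    then have "\<delta>0 * real n \<le> K" using AK by simp
    then show ?thesis unfolding N0_def using d0 by (simp add: field_simps)
  qed
  have eta0: "\<eta> \<ge> 0" using u by simp
  have nu: "real n * u \<le> N0 * \<eta>" using nN0 u by (intro mult_mono) auto
  have ng: "real n * g \<le> N0 * \<eta>" using nN0 g by (intro mult_mono) auto
  have N0e: "N0 * \<eta> \<le> 1/2" using e1 unfolding N0_def .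
  have ex1: "exp (real n * u) \<le> 1 + 2 * (N0 * \<eta>)"
    using real_exp_bound_lemma[of "real n * u"] nu N0e u by simp
  have ex2: "exp (real n * g) \<le> 2"
    using real_exp_bound_lemma[of "real n * g"] ng N0e g by simp
  have eA: "exp (-A) \<le> 1" using A0 d0 by simp
  have "exp (-\<delta> * real n) * exp (real n * u) + u * exp (real n * g) \<le> exp (-A) * (1 + 2 * (N0 * \<eta>)) + \<eta> * 2"
    unfolding A_def using ex1 ex2 u g by (intro add_mono mult_mono) auto
  also have "\<dots> \<le> exp (-A) + 2 * (N0 * \<eta>) + 2 * \<eta>"
  proof -
    have "K \<ge> A" using AK unfolding A_def .
    then have "N0 \<ge> 0" unfolding N0_def using A0 d0 by simp
    then have "0 \<le> 2 * (N0 * \<eta>)" using eta0 by simp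
    then have "exp (-A) * (2 * (N0 * \<eta>)) \<le> 2 * (N0 * \<eta>)"
      using eA by (simp add: mult_left_le_one_le)
    then show ?thesis by (simp add: algebra_simps)
  qed
  also have "\<dots> \<le> exp (-A) + exp (-K) * \<epsilon> * \<delta>0"
    using e2 unfolding N0_def by (simp add: algebra_simps)
  also have "\<dots> \<le> exp (-A) + exp (-A) * ((1 - c) * A)"
  proof -
    have "exp (-K) \<le> exp (-A)" using AK unfolding A_def by simp
    moreover have "\<epsilon> * \<delta>0 \<le> (1 - c) * A" using eps A0 d0 by (intro mult_mono) auto
    ultimately have "exp (-K) * (\<epsilon> * \<delta>0) \<le> exp (-A) * ((1 - c) * A)"
      using eps d0 A0 by (intro mult_mono) auto
    then show ?thesis by (simp add: mult.assoc)
  qed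
  also have "\<dots> = exp (-A) * (1 + (1 - c) * A)" by (simp add: algebra_simps)
  also have "\<dots> \<le> exp (-A) * exp ((1 - c) * A)" by (intro mult_left_mono) auto
  also have "\<dots> = exp (-c * \<delta> * real n)" unfolding A_def by (simp add: exp_add[symmetric] algebra_simps)
  finally show ?thesis .
qed

lemma regime2a:
  fixes \<delta> \<delta>0 c c0 \<epsilon> \<Lambda> W u g \<eta> K X0 :: real and n k :: nat
  assumes kX: "real k \<le> X0" and kX1: "X0 \<le> real k + 1"
    and X0def: "X0 = (c * (\<delta> * real n) + real n * g + ln 2) / ((c + \<epsilon>/2) * \<Lambda>)"
    and cc0: "c0 \<le> c" and c00: "0 < c0" and c1: "c < 1" and eps: "0 < \<epsilon>" "\<epsilon> \<le> 1 - c"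
    and L10: "\<Lambda> * \<epsilon> \<ge> 10" and L2: "\<Lambda> \<ge> 2"
    and W1: "W \<ge> 1" and lnW: "ln W \<le> 2 + (1 - c - \<epsilon>) * \<Lambda>"
    and u0: "u > 0" and ub: "u \<le> exp (-((c + \<epsilon>/2) * \<Lambda>))" and ue: "u \<le> \<eta>"
    and g: "0 \<le> g" "g \<le> \<eta>"
    and dd: "\<delta>0 \<le> \<delta>" and d0: "0 < \<delta>0" and AK: "\<delta> * real n \<ge> K"
    and Ke: "K * \<epsilon> / 4 \<ge> 2 / c0 + 1" and ee: "\<eta> * (2 / c0 + 1) / \<delta>0 \<le> \<epsilon> / 4"
  shows "exp (-\<delta> * real n) * W^k * exp (real n * u) + u^(k+1) * exp (real n * g) \<le> exp (-c * \<delta> * real n)"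
proof -
  define A where "A = \<delta> * real n"
  define \<beta> where "\<beta> = c + \<epsilon>/2"
  define Q where "Q = 2 + (1 - c - \<epsilon>) * \<Lambda>"
  have c0': "c > 0" using cc0 c00 by simp
  have bL: "\<beta> * \<Lambda> > 0" unfolding \<beta>_def using c0' eps L2 by simp
  have bc0: "\<beta> \<ge> c0" unfolding \<beta>_def using cc0 eps by simp
  have Q0: "Q \<ge> 0" unfolding Q_def using eps L2 by simp
  have A0: "A \<ge> 0" unfolding A_def using dd d0 by simp
  have nA: "real n \<le> A / \<delta>0"
  proof -
    have "\<delta>0 * real n \<le> \<delta> * real n" using dd by (simp add: mult_right_mono)
    then show ?thesis unfolding A_def using d0 by (simp add: field_simps)
  qed
  have X0e: "X0 * (\<beta> * \<Lambda>) = c * A + real n * g + ln 2"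
  proof -
    have "\<Lambda> \<noteq> 0" "c + \<epsilon>/2 \<noteq> 0" using L2 c0' eps by auto
    then show ?thesis unfolding X0def A_def \<beta>_def by simp
  qed
  have T2: "u^(k+1) * exp (real n * g) \<le> exp (-c * A) / 2"
  proof -
    have "u^(k+1) \<le> exp (-(\<beta> * \<Lambda>))^(k+1)"
      using u0 ub unfolding \<beta>_def by (intro power_mono) auto
    also have "\<dots> = exp (-(real (k+1) * (\<beta> * \<Lambda>)))"
      by (subst exp_of_nat_mult[symmetric]) (simp add: algebra_simps)
    also have "\<dots> \<le> exp (-(X0 * (\<beta> * \<Lambda>)))"
      using kX1 bL by (simp add: mult_right_mono)
    also have "\<dots> = exp (-(c * A) - real n * g - ln 2)" unfolding X0e by simp
    finally have "u^(k+1) * exp (real n * g) \<le> exp (-(c * A) - real n * g - ln 2) * exp (real n * g)"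
      by (simp add: mult_right_mono)
    also have "\<dots> = exp (-(c * A) - ln 2)" by (simp add: exp_add[symmetric])
    also have "\<dots> = exp (-c * A) / 2" by (simp add: exp_diff)
    finally show ?thesis .
  qed
  have cQ: "c * Q \<le> (1 - c - \<epsilon>/2) * (\<beta> * \<Lambda>)"
  proof -
    have id: "(1 - c - \<epsilon>/2) * (\<beta> * \<Lambda>) - c * Q = \<Lambda> * (\<epsilon>/2) * (1 - \<epsilon>/2) - 2 * c"
      unfolding Q_def \<beta>_def by (simp add: algebra_simps power2_eq_square)
    have e1: "\<epsilon> \<le> 1" using eps c0' by simp
    have "\<Lambda> * (\<epsilon>/2) * (1 - \<epsilon>/2) \<ge> 5 * (1/2)"
      using L10 e1 eps by (intro mult_mono) auto
    then show ?thesis using id c1 by linarith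
  qed
  have RQ: "Q \<le> (2 / c0) * (\<beta> * \<Lambda>)"
  proof -
    have "(1 - c - \<epsilon>) * \<Lambda> \<le> 1 * \<Lambda>" using eps c0' L2 by (intro mult_right_mono) auto
    then have "Q \<le> 2 * \<Lambda>" unfolding Q_def using L2 by linarith
    also have "\<dots> = (2 / c0) * (c0 * \<Lambda>)" using c00 by simp
    also have "\<dots> \<le> (2 / c0) * (\<beta> * \<Lambda>)" using bc0 c00 L2 by (intro mult_left_mono mult_right_mono) auto
    finally show ?thesis .
  qed
  have T1exp: "-A + real k * ln W + real n * u \<le> -(c * A) - ln 2"
  proof -
    have lw0: "ln W \<ge> 0" using W1 by simp
    have "(0::real) \<le> real k" by simp
    then have X0nn: "X0 \<ge> 0" using kX by linarith
    have "real k * ln W \<le> X0 * Q" using kX lw0 lnW X0nn unfolding Q_def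
      by (intro mult_mono) auto
    also have "X0 * Q = (c * A + real n * g + ln 2) * Q / (\<beta> * \<Lambda>)"
      unfolding X0def A_def \<beta>_def by simp
    also have "\<dots> = A * (c * Q / (\<beta> * \<Lambda>)) + (real n * g + ln 2) * (Q / (\<beta> * \<Lambda>))"
      by (simp add: algebra_simps add_divide_distrib)
    also have "\<dots> \<le> A * (1 - c - \<epsilon>/2) + (real n * g + ln 2) * (2 / c0)"
    proof (rule add_mono)
      have "c * Q / (\<beta> * \<Lambda>) \<le> 1 - c - \<epsilon>/2" using cQ bL by (simp add: divide_le_eq)
      then show "A * (c * Q / (\<beta> * \<Lambda>)) \<le> A * (1 - c - \<epsilon>/2)"
        using A0 by (rule mult_left_mono)
      have h1: "real n * g + ln 2 \<ge> 0" using g by simp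
      have h2: "Q / (\<beta> * \<Lambda>) \<le> 2 / c0" using RQ bL by (simp add: divide_le_eq)
      show "(real n * g + ln 2) * (Q / (\<beta> * \<Lambda>)) \<le> (real n * g + ln 2) * (2 / c0)"
        using h2 h1 by (rule mult_left_mono)
    qed
    finally have k1: "real k * ln W \<le> A * (1 - c - \<epsilon>/2) + (real n * g + ln 2) * (2 / c0)" .
    have ng: "real n * g \<le> (A / \<delta>0) * \<eta>" using nA g by (intro mult_mono) auto
    have nu: "real n * u \<le> (A / \<delta>0) * \<eta>" using nA ue u0 by (intro mult_mono) auto
    have ln2: "ln (2::real) \<le> 1" using ln_2_less_1 by simp
    have "(real n * g + ln 2) * (2 / c0) + real n * u + ln 2 \<le> ((A / \<delta>0) * \<eta> + 1) * (2 / c0) + (A / \<delta>0) * \<eta> + 1"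
      using ng nu ln2 c00 by (intro add_mono mult_right_mono) auto
    also have "\<dots> = A * (\<eta> * (2 / c0 + 1) / \<delta>0) + (2 / c0 + 1)"
      using c00 d0 by (simp add: field_simps)
    also have "\<dots> \<le> A * (\<epsilon> / 4) + K * \<epsilon> / 4"
    proof -
      have "A * (\<eta> * (2 / c0 + 1) / \<delta>0) \<le> A * (\<epsilon> / 4)" by (rule mult_left_mono[OF ee A0])
      then show ?thesis using Ke by linarith
    qed
    also have "\<dots> \<le> A * (\<epsilon> / 4) + A * \<epsilon> / 4"
    proof -
      have "K * \<epsilon> \<le> A * \<epsilon>" using AK eps unfolding A_def by (intro mult_right_mono) auto
      then show ?thesis by simp
    qed
    finally have "(real n * g + ln 2) * (2 / c0) + real n * u + ln 2 \<le> A * (\<epsilon>/2)" by simp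
    moreover have "A * (1 - c - \<epsilon>/2) = A - c * A - A * (\<epsilon>/2)" by (simp add: algebra_simps)
    ultimately show ?thesis using k1 by linarith
  qed
  have T1: "exp (-\<delta> * real n) * W^k * exp (real n * u) \<le> exp (-c * A) / 2"
  proof -
    have "W^k = exp (real k * ln W)" using W1 by (simp add: exp_of_nat_mult)
    then have "exp (-\<delta> * real n) * W^k * exp (real n * u) = exp (-A + real k * ln W + real n * u)"
      unfolding A_def by (simp add: exp_add[symmetric])
    also have "\<dots> \<le> exp (-(c * A) - ln 2)" using T1exp by simp
    also have "\<dots> = exp (-c * A) / 2" by (simp add: exp_diff)
    finally show ?thesis .
  qed
  have "exp (-c * A) = exp (-c * \<delta> * real n)" unfolding A_def by (simp add: mult.assoc)
  then show ?thesis using T1 T2 by linarith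
qed

lemma regime2b:
  fixes \<delta> \<delta>0 c c0 \<epsilon> \<Lambda> W u g \<eta> X0 :: real and n :: nat
  assumes n1: "n \<ge> 1" and nX: "real n < X0"
    and X0def: "X0 = (c * (\<delta> * real n) + real n * g + ln 2) / ((c + \<epsilon>/2) * \<Lambda>)"
    and cc0: "c0 \<le> c" and c00: "0 < c0" and c1: "c < 1" and eps: "0 < \<epsilon>" "\<epsilon> \<le> 1 - c"
    and L10: "\<Lambda> * \<epsilon> \<ge> 10" and L2: "\<Lambda> \<ge> 2"
    and W1: "W \<ge> 1" and lnW: "ln W \<le> 2 + (1 - c - \<epsilon>) * \<Lambda>"
    and u0: "u > 0" and u1: "u \<le> 1" and g: "0 \<le> g" "g \<le> 1"
  shows "exp (-\<delta> * real n) * W^n * exp (real n * u) \<le> exp (-c * \<delta> * real n)"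
proof -
  define A where "A = \<delta> * real n"
  define \<beta> where "\<beta> = c + \<epsilon>/2"
  have c0': "c > 0" using cc0 c00 by simp
  have bL: "\<beta> * \<Lambda> > 0" unfolding \<beta>_def using c0' eps L2 by simp
  have n0: "real n \<ge> 1" using n1 by simp
  have "real n * (\<beta> * \<Lambda>) < c * A + real n * g + ln 2"
    using nX bL unfolding X0def A_def \<beta>_def by (simp add: field_simps)
  moreover have "ln (2::real) \<le> real n" using ln_2_less_1 n0 by simp
  ultimately have cA: "c * A \<ge> real n * (\<beta> * \<Lambda> - g - 1)" by (simp add: algebra_simps)
  have key: "c * (3 + (1 - c - \<epsilon>) * \<Lambda>) \<le> (1 - c) * (\<beta> * \<Lambda> - g - 1)"
  proof -
    have id: "(1 - c) * (\<beta> * \<Lambda>) - c * ((1 - c - \<epsilon>) * \<Lambda>) = \<Lambda> * \<epsilon> * (1 + c) / 2"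
      unfolding \<beta>_def by (simp add: field_simps)
    have "\<Lambda> * \<epsilon> * 1 \<le> \<Lambda> * \<epsilon> * (1 + c)" using L10 c0' by (intro mult_left_mono) auto
    then have "\<Lambda> * \<epsilon> * (1 + c) / 2 \<ge> \<Lambda> * \<epsilon> / 2" by simp
    moreover have "(1 - c) * (g + 1) \<le> 1 * 2" using c1 c0' g by (intro mult_mono) auto
    moreover have "c * (3 + (1 - c - \<epsilon>) * \<Lambda>) = 3 * c + c * ((1 - c - \<epsilon>) * \<Lambda>)" by (simp add: algebra_simps)
    moreover have "(1 - c) * (\<beta> * \<Lambda> - g - 1) = (1 - c) * (\<beta> * \<Lambda>) - (1 - c) * (g + 1)" by (simp add: algebra_simps)
    ultimately show ?thesis using id L10 c1 by linarith
  qed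
  have "c * (real n * ln W + real n * u) \<le> c * (real n * (3 + (1 - c - \<epsilon>) * \<Lambda>))"
  proof -
    have "ln W + u \<le> 3 + (1 - c - \<epsilon>) * \<Lambda>" using lnW u1 by simp
    then have "real n * (ln W + u) \<le> real n * (3 + (1 - c - \<epsilon>) * \<Lambda>)" by (simp add: mult_left_mono)
    then have "c * (real n * (ln W + u)) \<le> c * (real n * (3 + (1 - c - \<epsilon>) * \<Lambda>))"
      by (rule mult_left_mono) (use c0' in auto)
    then show ?thesis by (simp add: distrib_left)
  qed
  also have "\<dots> = real n * (c * (3 + (1 - c - \<epsilon>) * \<Lambda>))" by simp
  also have "\<dots> \<le> real n * ((1 - c) * (\<beta> * \<Lambda> - g - 1))" using key by (simp add: mult_left_mono)
  also have "\<dots> = (1 - c) * (real n * (\<beta> * \<Lambda> - g - 1))" by simp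
  also have "\<dots> \<le> (1 - c) * (c * A)" using cA c1 by (simp add: mult_left_mono)
  finally have "c * (real n * ln W + real n * u) \<le> c * ((1 - c) * A)" by (simp add: algebra_simps)
  then have ex: "real n * ln W + real n * u \<le> (1 - c) * A" using c0' by simp
  have "W^n = exp (real n * ln W)" using W1 by (simp add: exp_of_nat_mult)
  then have "exp (-\<delta> * real n) * W^n * exp (real n * u) = exp (-A + (real n * ln W + real n * u))"
    unfolding A_def by (simp add: exp_add[symmetric] algebra_simps)
  also have "\<dots> \<le> exp (-c * A)" using ex by (simp add: algebra_simps)
  finally show ?thesis unfolding A_def by (simp add: mult.assoc)
qed



lemma choose_k:
  fixes \<delta> \<delta>0 c c0 \<epsilon> \<Lambda> W u g \<eta> K :: real and n :: nat
  assumes cc0: "c0 \<le> c" and c00: "0 < c0" and c1: "c < 1" and eps: "0 < \<epsilon>" "\<epsilon> \<le> 1 - c"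
    and L10: "\<Lambda> * \<epsilon> \<ge> 10" and L2: "\<Lambda> \<ge> 2"
    and W1: "W \<ge> 1" and lnW: "ln W \<le> 2 + (1 - c - \<epsilon>) * \<Lambda>"
    and u0: "u > 0" and ub: "u \<le> exp (-((c + \<epsilon>/2) * \<Lambda>))" and ue: "u \<le> \<eta>"
    and g: "0 \<le> g" "g \<le> \<eta>" and e1': "\<eta> \<le> 1"
    and dd: "\<delta>0 \<le> \<delta>" and d0: "0 < \<delta>0"
    and Ke: "K * \<epsilon> / 4 \<ge> 2 / c0 + 1" and ee: "\<eta> * (2 / c0 + 1) / \<delta>0 \<le> \<epsilon> / 4"
    and e1: "(K / \<delta>0) * \<eta> \<le> 1/2" and e2: "2 * (K / \<delta>0 + 1) * \<eta> \<le> exp (-K) * \<epsilon> * \<delta>0"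
  shows "\<exists>k\<le>n. exp (-\<delta> * real n) * W^k * exp (real n * u)
            + (if k < n then u^(k+1) * exp (real n * g) else 0) \<le> exp (-c * \<delta> * real n)"
proof (cases "n = 0")
  case True
  then show ?thesis by (intro exI[of _ 0]) simp
next
  case False
  then have n1: "n \<ge> 1" by simp
  have c0': "c \<ge> 0" using cc0 c00 by simp
  show ?thesis
  proof (cases "\<delta> * real n \<le> K")
    case True
    have "exp (-\<delta> * real n) * exp (real n * u) + u * exp (real n * g) \<le> exp (-c * \<delta> * real n)"
      by (rule regime1[OF n1 True dd d0 c0' eps _ ue g e1 e2]) (use u0 in simp)
    then show ?thesis using n1 by (intro exI[of _ 0]) simp
  next
    case False
    then have AK: "\<delta> * real n \<ge> K" by simp
    define X0 where "X0 = (c * (\<delta> * real n) + real n * g + ln 2) / ((c + \<epsilon>/2) * \<Lambda>)"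
    have X0pos: "X0 > 0"
    proof -
      have "c * (\<delta> * real n) + real n * g + ln 2 > 0" using c0' dd d0 g by (simp add: add_nonneg_pos)
      moreover have "(c + \<epsilon>/2) * \<Lambda> > 0" using c0' eps L2 by simp
      ultimately show ?thesis unfolding X0_def by simp
    qed
    define j where "j = nat \<lceil>X0\<rceil>"
    have jX: "real j \<ge> X0" "real j < X0 + 1" unfolding j_def using X0pos
      by (simp_all add: of_nat_nat) linarith+
    have j1: "j \<ge> 1" using jX X0pos by simp
    show ?thesis
    proof (cases "j \<le> n")
      case True
      define k where "k = j - 1"
      have kn: "k < n" "k \<le> n" using True j1 unfolding k_def by auto
      have kj: "real k = real j - 1" using j1 unfolding k_def by (simp add: of_nat_diff)
      have "exp (-\<delta> * real n) * W^k * exp (real n * u) + u^(k+1) * exp (real n * g) \<le> exp (-c * \<delta> * real n)"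
        by (rule regime2a[OF _ _ X0_def cc0 c00 c1 eps L10 L2 W1 lnW u0 ub ue g dd d0 AK Ke ee])
           (use kj jX in auto)
      then show ?thesis using kn by (intro exI[of _ k]) simp
    next
      case False
      then have "real n < X0"
      proof -
        have "\<not> X0 \<le> real n"
        proof
          assume "X0 \<le> real n"
          then have "j \<le> n" unfolding j_def by simp
          then show False using False by simp
        qed
        then show ?thesis by simp
      qed
      then have "exp (-\<delta> * real n) * W^n * exp (real n * u) \<le> exp (-c * \<delta> * real n)"
        by (rule regime2b[OF n1 _ X0_def cc0 c00 c1 eps L10 L2 W1 lnW u0 _ g(1)])
           (use ue g e1' in auto)
      then show ?thesis by (intro exI[of _ n]) simp
    qed
  qed
qed



lemma pow_fact_exp: "real (Suc k) ^ k \<le> exp 1 ^ k * fact k"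
proof (induction k)
  case 0 then show ?case by simp
next
  case (Suc k)
  have t: "(1 + 1 / real (Suc k)) ^ Suc k \<le> exp 1"
  proof -
    have "(1 + 1 / real (Suc k)) ^ Suc k \<le> exp (1 / real (Suc k)) ^ Suc k"
      by (intro power_mono) (auto simp: add.commute)
    also have "\<dots> = exp (real (Suc k) * (1 / real (Suc k)))" by (simp only: exp_of_nat_mult)
    also have "\<dots> = exp 1" by simp
    finally show ?thesis .
  qed
  have "real (Suc (Suc k)) ^ Suc k = real (Suc k) ^ Suc k * (1 + 1 / real (Suc k)) ^ Suc k"
  proof -
    have "real (Suc (Suc k)) = real (Suc k) * (1 + 1 / real (Suc k))" by (simp add: field_simps)
    then show ?thesis by (simp add: power_mult_distrib)
  qed
  also have "\<dots> = real (Suc k) * real (Suc k) ^ k * (1 + 1 / real (Suc k)) ^ Suc k" by simp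
  also have "\<dots> \<le> real (Suc k) * (exp 1 ^ k * fact k) * exp 1"
    by (intro mult_mono mult_left_mono Suc.IH t) auto
  also have "\<dots> = exp 1 ^ Suc k * fact (Suc k)" by (simp add: algebra_simps)
  finally show ?case .
qed

lemma geo_bound:
  fixes P :: "real poly" and n k :: nat and E :: "real set" and a b d M x :: real
  assumes degP: "degree P \<le> n" and kn: "k \<le> n"
    and E: "E \<in> lmeasurable" and Eab: "E \<subseteq> {a..b}" and m: "measure lebesgue E > 0"
    and PE: "\<And>y. y \<in> closure E \<Longrightarrow> \<bar>poly P y\<bar> \<le> M"
    and P1: "\<And>y. y \<in> {-1..1} \<Longrightarrow> \<bar>poly P y\<bar> \<le> 1"
    and ab: "-1 \<le> a" "b \<le> 1" "a \<le> b"
    and d: "0 < d" "d \<le> 1/8" "b - a \<le> d"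
    and x: "x \<in> {a..b}"
  shows "\<bar>poly P x\<bar> \<le> M * (2 * exp 1 * (b - a) / measure lebesgue E)^k * exp (real n * ((b - a) / d))
     + (if k < n then ((b - a) / d)^(k+1) * exp (real n * (4 * (d + (b - a)) + sqrt (3 * (4 * (d + (b - a)))))) else 0)"
proof -
  define m where "m = measure lebesgue E"
  define L where "L = b - a"
  define h where "h = m / real (Suc k)"
  define \<tau> where "\<tau> = 4 * (d + L)"
  define g where "g = \<tau> + sqrt (3 * \<tau>)"
  have m0: "m > 0" using m unfolding m_def .
  have h0: "h > 0" unfolding h_def using m0 by simp
  have L0: "L \<ge> 0" unfolding L_def using ab by simp
  have tau1: "\<tau> \<le> 1" "\<tau> \<ge> 0" unfolding \<tau>_def L_def using d ab by auto
  obtain xs where xsE: "\<And>i. i \<le> k \<Longrightarrow> xs i \<in> closure E"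
    and gaps: "\<And>i j. i \<le> k \<Longrightarrow> j \<le> k \<Longrightarrow> \<bar>xs i - xs j\<bar> \<ge> \<bar>real i - real j\<bar> * h"
    using node_select[OF E Eab m, of k] unfolding h_def m_def by blast
  have clE: "closure E \<subseteq> {a..b}" by (rule closure_minimal[OF Eab]) simp
  have xs: "\<And>i. i \<le> k \<Longrightarrow> xs i \<in> {a..b}" using xsE clE by blast
  have PEx: "\<And>i. i \<le> k \<Longrightarrow> \<bar>poly P (xs i)\<bar> \<le> M" using xsE PE by blast
  obtain ctr \<sigma> where sg: "\<bar>\<sigma>\<bar> = 1"
    and dist: "\<And>y z. y \<in> {ctr - 1/4..ctr + 1/4} \<Longrightarrow> z \<in> {a..b} \<Longrightarrow> \<bar>y - z\<bar> \<ge> d"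
    and Fsub: "{ctr - 1/4..ctr + 1/4} \<subseteq> {-1..1}"
    and Xb: "4 * \<sigma> * (x - ctr) \<ge> 1" "4 * \<sigma> * (x - ctr) \<le> 1 + \<tau>"
  proof (cases "b + d + 1/2 \<le> 1")
    case True
    show ?thesis
    proof (rule that[of "-1" "b + d + 1/4"])
      fix y z assume "y \<in> {b + d + 1/4 - 1/4..b + d + 1/4 + 1/4}" "z \<in> {a..b}"
      then show "\<bar>y - z\<bar> \<ge> d" by auto
    next
      show "{b + d + 1/4 - 1/4..b + d + 1/4 + 1/4} \<subseteq> {-1..1}" using True ab d by auto
    next
      show "4 * -1 * (x - (b + d + 1/4)) \<ge> 1" using x d by auto
      show "4 * -1 * (x - (b + d + 1/4)) \<le> 1 + \<tau>" using x unfolding \<tau>_def L_def by auto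
    qed simp
  next
    case False
    show ?thesis
    proof (rule that[of "1" "a - d - 1/4"])
      fix y z assume "y \<in> {a - d - 1/4 - 1/4..a - d - 1/4 + 1/4}" "z \<in> {a..b}"
      then show "\<bar>y - z\<bar> \<ge> d" by auto
    next
      show "{a - d - 1/4 - 1/4..a - d - 1/4 + 1/4} \<subseteq> {-1..1}" using False ab d by auto
    next
      show "4 * 1 * (x - (a - d - 1/4)) \<ge> 1" using x d by auto
      show "4 * 1 * (x - (a - d - 1/4)) \<le> 1 + \<tau>" using x unfolding \<tau>_def L_def by auto
    qed simp
  qed
  have PF: "\<And>y. y \<in> {ctr - 1/4..ctr + 1/4} \<Longrightarrow> \<bar>poly P y\<bar> \<le> 1" using Fsub P1 by blast
  define X where "X = 4 * \<sigma> * (x - ctr)"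
  have main: "\<bar>poly P x\<bar> \<le> M * (((b - a) / h)^k * 2^k / fact k) * (1 + (b - a) / d)^(n - k)
     + (if k < n then ((b - a) / d)^(k+1) * (X + sqrt (X^2 - 1))^(n - k - 1) else 0)"
    unfolding X_def by (rule interp_bound[OF degP kn xs gaps h0 PEx sg d(1) dist PF x Xb(1)])
  have M0: "M \<ge> 0" using PEx[of 0] by (meson abs_ge_zero order_trans zero_le)
  have b1: "((b - a) / h)^k * 2^k / fact k \<le> (2 * exp 1 * (b - a) / m)^k"
  proof -
    have e1: "(b - a) / h = (L / m) * real (Suc k)" unfolding h_def L_def using m0 by simp
    have "((b - a) / h)^k * 2^k / fact k = (2 * (L / m))^k * (real (Suc k) ^ k / fact k)"
      unfolding e1 by (simp only: power_mult_distrib) (simp add: algebra_simps)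
    also have "\<dots> \<le> (2 * (L / m))^k * exp 1 ^ k"
    proof (rule mult_left_mono)
      show "real (Suc k) ^ k / fact k \<le> exp 1 ^ k"
        using pow_fact_exp[of k] by (simp add: divide_le_eq)
      show "0 \<le> (2 * (L / m))^k" using L0 m0 by simp
    qed
    also have "\<dots> = (2 * exp 1 * (b - a) / m)^k" unfolding L_def by (simp add: power_mult_distrib[symmetric] algebra_simps)
    finally show ?thesis .
  qed
  have b2: "(1 + (b - a) / d)^(n - k) \<le> exp (real n * ((b - a) / d))"
  proof -
    have "(1 + (b - a) / d)^(n - k) \<le> exp ((b - a) / d)^(n - k)"
      using L0 d unfolding L_def by (intro power_mono) (auto simp: add.commute)
    also have "\<dots> = exp (real (n - k) * ((b - a) / d))" by (simp only: exp_of_nat_mult)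
    also have "\<dots> \<le> exp (real n * ((b - a) / d))"
    proof -
      have "real (n - k) * ((b - a) / d) \<le> real n * ((b - a) / d)"
        by (rule mult_right_mono) (use L0 d in \<open>auto simp: L_def\<close>)
      then show ?thesis by simp
    qed
    finally show ?thesis .
  qed
  have b3: "(X + sqrt (X^2 - 1))^(n - k - 1) \<le> exp (real n * g)"
  proof -
    have X1: "X \<ge> 1" "X \<le> 1 + \<tau>" using Xb unfolding X_def by auto
    have "X^2 - 1 \<le> (1 + \<tau>)^2 - 1" using X1 by (intro diff_right_mono power_mono) auto
    also have "\<dots> \<le> 3 * \<tau>" using tau1 by (simp add: power2_eq_square algebra_simps)
      (smt (verit) mult_left_le_one_le)
    finally have "X^2 - 1 \<le> 3 * \<tau>" .
    then have "sqrt (X^2 - 1) \<le> sqrt (3 * \<tau>)" by (rule real_sqrt_le_mono)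
    then have "X + sqrt (X^2 - 1) \<le> 1 + g" using X1 unfolding g_def by linarith
    also have "\<dots> \<le> exp g" by (simp add: add.commute)
    finally have xe: "X + sqrt (X^2 - 1) \<le> exp g" .
    have sq0: "sqrt (X^2 - 1) \<ge> 0" using X1 by (simp add: one_le_power)
    have "(X + sqrt (X^2 - 1))^(n - k - 1) \<le> exp g ^ (n - k - 1)"
      using xe X1 sq0 by (intro power_mono) auto
    also have "\<dots> = exp (real (n - k - 1) * g)" by (simp only: exp_of_nat_mult)
    also have "\<dots> \<le> exp (real n * g)"
    proof -
      have "real (n - k - 1) * g \<le> real n * g"
        by (rule mult_right_mono) (use tau1 in \<open>auto simp: g_def\<close>)
      then show ?thesis by simp
    qed
    finally show ?thesis .
  qed
  have "M * (((b - a) / h)^k * 2^k / fact k) * (1 + (b - a) / d)^(n - k)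
        \<le> M * (2 * exp 1 * (b - a) / m)^k * exp (real n * ((b - a) / d))"
  proof (intro mult_mono mult_left_mono b1 b2 M0)
    show "0 \<le> ((b - a) / h)^k * 2^k / fact k" using L0 h0 unfolding L_def by simp
    show "0 \<le> (1 + (b - a) / d)^(n - k)" using L0 d unfolding L_def by simp
    show "0 \<le> M * (2 * exp 1 * (b - a) / m)^k" using M0 L0 m0 unfolding L_def by simp
  qed simp
  moreover have "(if k < n then ((b - a) / d)^(k+1) * (X + sqrt (X^2 - 1))^(n - k - 1) else 0)
      \<le> (if k < n then ((b - a) / d)^(k+1) * exp (real n * g) else 0)"
  proof -
    have "0 \<le> ((b - a) / d)^(k+1)" using L0 d unfolding L_def by simp
    then have "((b - a) / d)^(k+1) * (X + sqrt (X^2 - 1))^(n - k - 1) \<le> ((b - a) / d)^(k+1) * exp (real n * g)"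
      using b3 by (intro mult_left_mono)
    then show ?thesis by simp
  qed
  ultimately show ?thesis using main unfolding m_def g_def \<tau>_def L_def by linarith
qed




lemma poly_bdd:
  fixes P :: "real poly"
  assumes "S \<subseteq> {-1..1}"
  shows "bdd_above ((\<lambda>x. \<bar>poly P x\<bar>) ` S)"
proof -
  have "compact ((\<lambda>x. \<bar>poly P x\<bar>) ` {-1..(1::real)})"
    by (rule compact_continuous_image) (auto intro!: continuous_intros)
  then have "bdd_above ((\<lambda>x. \<bar>poly P x\<bar>) ` {-1..(1::real)})"
    by (simp add: bounded_imp_bdd_above compact_imp_bounded)
  then show ?thesis by (rule bdd_above_mono) (use assms in auto)
qed

lemma interval_facts:
  fixes I :: "real set"
  assumes iv: "is_interval I" and ne: "I \<noteq> {}" and sub: "I \<subseteq> {-1..1}"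
  shows "I \<subseteq> {Inf I..Sup I}" "-1 \<le> Inf I" "Sup I \<le> 1" "Sup I - Inf I \<le> measure lebesgue I"
proof -
  have bb1: "bdd_below I" unfolding bdd_below_def using sub by (intro exI[of _ "-1"]) auto
  have bb2: "bdd_above I" unfolding bdd_above_def using sub by (intro exI[of _ "1"]) auto
  note bb = bb1 bb2
  show sub2: "I \<subseteq> {Inf I..Sup I}" using bb by (auto intro: cInf_lower cSup_upper)
  obtain x0 where x0: "x0 \<in> I" using ne by blast
  show "-1 \<le> Inf I" using sub ne by (intro cInf_greatest) auto
  show "Sup I \<le> 1" using sub ne by (intro cSup_least) auto
  have Im: "I \<in> lmeasurable"
    by (rule measurable_convex[OF is_interval_convex[OF iv]]) (rule bounded_subset[OF bounded_closed_interval sub])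
  have oo: "{Inf I<..<Sup I} \<subseteq> I"
  proof
    fix y assume y: "y \<in> {Inf I<..<Sup I}"
    obtain x1 where x1: "x1 \<in> I" "x1 < y" using cInf_lessD[OF ne, of y] y by auto
    obtain x2 where x2: "x2 \<in> I" "y < x2" using less_cSupD[OF ne, of y] y by auto
    show "y \<in> I" using iv x1 x2 unfolding is_interval_1 by (meson less_imp_le)
  qed
  have "measure lebesgue {Inf I<..<Sup I} \<le> measure lebesgue I"
    by (rule measure_mono_fmeasurable[OF oo]) (use Im in auto)
  moreover have "Inf I \<le> Sup I" using sub2 x0 by auto
  ultimately show "Sup I - Inf I \<le> measure lebesgue I" by simp
qed

theorem mainTheorem4:
  fixes \<delta>0 c0 \<epsilon> :: real
  assumes "\<delta>0 > 0" and "0 < c0" and "c0 < 1" and "\<epsilon> > 0"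
  shows "\<exists>\<kappa>>0. \<forall>(n::nat) (P::real poly) (\<delta>::real) (c::real) (E::real set) (I::real set).
     degree P \<le> n \<longrightarrow>
     unif_norm P {-1..1} \<le> 1 \<longrightarrow>
     \<delta> \<ge> \<delta>0 \<longrightarrow> c0 \<le> c \<longrightarrow> c < 1 \<longrightarrow>
     \<epsilon> < (1 - c) / (2 - c) \<longrightarrow>
     E \<in> sets lebesgue \<longrightarrow> E \<noteq> {} \<longrightarrow> E \<subseteq> {-1..1} \<longrightarrow>
     measure lebesgue E < \<kappa> \<longrightarrow>
     unif_norm P E \<le> exp (- \<delta> * real n) \<longrightarrow>
     is_interval I \<longrightarrow> E \<subseteq> I \<longrightarrow> I \<subseteq> {-1..1} \<longrightarrow>
     measure lebesgue I \<le> measure lebesgue E powr (1 / (2 - c) + \<epsilon>) \<longrightarrow>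
     unif_norm P I \<le> exp (- c * \<delta> * real n)"
proof -
  note d0 = assms(1) and c00 = assms(2) and c01 = assms(3) and eps0 = assms(4)
  define K where "K = 4 * (2 / c0 + 1) / \<epsilon>"
  define N0 where "N0 = K / \<delta>0"
  define \<eta> where "\<eta> = min 1 (min (1 / (2 * (N0 + 1))) (min (exp (-K) * \<epsilon> * \<delta>0 / (2 * (N0 + 1))) (\<epsilon> * \<delta>0 / (4 * (2 / c0 + 1)))))"
  define \<Lambda>0 where "\<Lambda>0 = max (10 / \<epsilon>) 2"
  define \<kappa> where "\<kappa> = min ((\<eta> / 13) powr (4 / \<epsilon>)) (exp (-\<Lambda>0))"
  have B0: "2 / c0 + 1 > 0" using c00 by (simp add: add_pos_pos)
  have K0: "K > 0" unfolding K_def using B0 eps0 by (intro divide_pos_pos mult_pos_pos) auto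
  have Ke: "K * \<epsilon> / 4 \<ge> 2 / c0 + 1" unfolding K_def using eps0 by simp
  have N00: "N0 > 0" unfolding N0_def using K0 d0 by simp
  have eta0: "\<eta> > 0" unfolding \<eta>_def using N00 eps0 d0 B0 by simp
  have eta1: "\<eta> \<le> 1" unfolding \<eta>_def by simp
  have etaA: "\<eta> \<le> 1 / (2 * (N0 + 1))" unfolding \<eta>_def by simp
  have etaB: "\<eta> \<le> exp (-K) * \<epsilon> * \<delta>0 / (2 * (N0 + 1))" unfolding \<eta>_def by simp
  have etaC: "\<eta> \<le> \<epsilon> * \<delta>0 / (4 * (2 / c0 + 1))" unfolding \<eta>_def by simp
  have e1: "(K / \<delta>0) * \<eta> \<le> 1/2"
  proof -
    have "N0 * \<eta> \<le> (N0 + 1) * \<eta>" using eta0 by simp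
    also have "\<dots> \<le> (N0 + 1) * (1 / (2 * (N0 + 1)))" using etaA N00 by (intro mult_left_mono) auto
    also have "\<dots> = 1/2" using N00 by simp
    finally show ?thesis unfolding N0_def .
  qed
  have e2: "2 * (K / \<delta>0 + 1) * \<eta> \<le> exp (-K) * \<epsilon> * \<delta>0"
  proof -
    have "2 * (N0 + 1) * \<eta> \<le> 2 * (N0 + 1) * (exp (-K) * \<epsilon> * \<delta>0 / (2 * (N0 + 1)))"
      using etaB N00 by (intro mult_left_mono) auto
    also have "\<dots> = exp (-K) * \<epsilon> * \<delta>0" using N00 by simp
    finally show ?thesis unfolding N0_def .
  qed
  have ee: "\<eta> * (2 / c0 + 1) / \<delta>0 \<le> \<epsilon> / 4"
  proof -
    have "\<eta> * (2 / c0 + 1) \<le> (\<epsilon> * \<delta>0 / (4 * (2 / c0 + 1))) * (2 / c0 + 1)"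
      using etaC B0 by (intro mult_right_mono) auto
    also have "\<dots> = \<epsilon> * \<delta>0 / 4"
    proof -
      have gen: "B \<noteq> 0 \<Longrightarrow> X / (4 * B) * B = X / 4" for B X :: real by simp
      show ?thesis by (rule gen) (use B0 in simp)
    qed
    finally show ?thesis using d0 by (simp add: divide_le_eq)
  qed
  have kappa0: "\<kappa> > 0" unfolding \<kappa>_def using eta0 by simp
  show ?thesis
  proof (intro exI[of _ \<kappa>] conjI allI impI)
    show "\<kappa> > 0" by (rule kappa0)
  next
    fix n :: nat and P :: "real poly" and \<delta> c :: real and E I :: "real set"
    assume degP: "degree P \<le> n"
      and P1n: "unif_norm P {-1..1} \<le> 1"
      and dd: "\<delta> \<ge> \<delta>0" and cc0: "c0 \<le> c" and c1: "c < 1"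
      and epsc: "\<epsilon> < (1 - c) / (2 - c)"
      and Esets: "E \<in> sets lebesgue" and Ene: "E \<noteq> {}" and Esub: "E \<subseteq> {-1..1}"
      and Ek: "measure lebesgue E < \<kappa>"
      and PEn: "unif_norm P E \<le> exp (- \<delta> * real n)"
      and Iiv: "is_interval I" and EI: "E \<subseteq> I" and Isub: "I \<subseteq> {-1..1}"
      and IE: "measure lebesgue I \<le> measure lebesgue E powr (1 / (2 - c) + \<epsilon>)"
    define m where "m = measure lebesgue E"
    define M where "M = exp (- \<delta> * real n)"
    define p where "p = 1 / (2 - c) + \<epsilon>"
    have c0': "c > 0" using cc0 c00 by simp
    have Em: "E \<in> lmeasurable"
      by (rule bounded_set_imp_lmeasurable[OF bounded_subset[OF bounded_closed_interval Esub] Esets])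
    have P1: "\<bar>poly P y\<bar> \<le> 1" if "y \<in> {-1..1}" for y
    proof -
      have "\<bar>poly P y\<bar> \<le> unif_norm P {-1..1}" unfolding unif_norm_def
        by (rule cSUP_upper[OF that poly_bdd]) simp
      then show ?thesis using P1n by simp
    qed
    have PE0: "\<bar>poly P y\<bar> \<le> M" if "y \<in> E" for y
    proof -
      have "\<bar>poly P y\<bar> \<le> unif_norm P E" unfolding unif_norm_def
        by (rule cSUP_upper[OF that poly_bdd[OF Esub]])
      then show ?thesis using PEn unfolding M_def by simp
    qed
    have PE: "\<bar>poly P y\<bar> \<le> M" if "y \<in> closure E" for y
    proof -
      have "closure E \<subseteq> {y. \<bar>poly P y\<bar> \<le> M}"
        by (rule closure_minimal) (use PE0 in \<open>auto intro!: closed_Collect_le continuous_intros\<close>)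
      then show ?thesis using that by blast
    qed
    have Ine: "I \<noteq> {}" using Ene EI by blast
    define a where "a = Inf I"
    define b where "b = Sup I"
    have Iab: "I \<subseteq> {a..b}" and a1: "-1 \<le> a" and b1: "b \<le> 1" and Lmeas: "b - a \<le> measure lebesgue I"
      using interval_facts[OF Iiv Ine Isub] unfolding a_def b_def by auto
    have Eab: "E \<subseteq> {a..b}" using EI Iab by blast
    obtain e0 where e0: "e0 \<in> E" using Ene by blast
    have ab: "a \<le> b" using e0 Eab by auto
    have mL: "m \<le> b - a"
    proof -
      have "m \<le> measure lebesgue {a..b}" unfolding m_def
        by (rule measure_mono_fmeasurable[OF Eab Esets]) simp
      then show ?thesis using ab by simp
    qed
    have Lp: "b - a \<le> m powr p" using Lmeas IE unfolding m_def p_def by simp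
    have cdn: "exp (-\<delta> * real n) \<le> exp (- c * \<delta> * real n)"
    proof -
      have "c * (\<delta> * real n) \<le> 1 * (\<delta> * real n)" using c1 dd d0 by (intro mult_right_mono) auto
      then show ?thesis by (simp add: mult.assoc)
    qed
    show "unif_norm P I \<le> exp (- c * \<delta> * real n)"
      unfolding unif_norm_def
    proof (rule cSUP_least[OF Ine])
      fix x assume xI: "x \<in> I"
      then have x: "x \<in> {a..b}" using Iab by blast
      show "\<bar>poly P x\<bar> \<le> exp (- c * \<delta> * real n)"
      proof (cases "m = 0")
        case True
        then have "b - a \<le> 0" using Lp by simp
        then have "x = e0" using x e0 Eab by force
        then show ?thesis using PE0[OF e0] cdn unfolding M_def by (metis order_trans)
      next
        case False
        then have m0: "m > 0" using measure_nonneg[of lebesgue E] unfolding m_def by linarith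
        have mk: "m < \<kappa>" using Ek unfolding m_def .
        have L0pos: "\<Lambda>0 \<ge> 2" "\<Lambda>0 \<ge> 10 / \<epsilon>" unfolding \<Lambda>0_def by auto
        have kexp: "\<kappa> \<le> exp (-\<Lambda>0)" unfolding \<kappa>_def by simp
        have m1: "m < 1"
        proof -
          have "exp (-\<Lambda>0) \<le> 1" using L0pos by simp
          then show ?thesis using mk kexp by linarith
        qed
        define \<Lambda> where "\<Lambda> = - ln m"
        have LamL: "\<Lambda> \<ge> \<Lambda>0"
        proof -
          have "ln m < ln \<kappa>" using m0 mk by simp
          moreover have "ln \<kappa> \<le> ln (exp (-\<Lambda>0))" using kappa0 kexp by (subst ln_le_cancel_iff) auto
          ultimately show ?thesis unfolding \<Lambda>_def by simp
        qed
        have L2: "\<Lambda> \<ge> 2" using LamL L0pos by simp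
        have L10: "\<Lambda> * \<epsilon> \<ge> 10"
        proof -
          have "10 / \<epsilon> \<le> \<Lambda>" using LamL L0pos by simp
          then show ?thesis using eps0 by (simp add: divide_le_eq)
        qed
        define s where "s = m powr (\<epsilon>/4)"
        define d where "d = m powr (\<epsilon>/2)"
        define L where "L = b - a"
        have s_eta: "s \<le> \<eta> / 13"
        proof -
          have "m powr (\<epsilon>/4) < \<kappa> powr (\<epsilon>/4)" using m0 mk eps0 by (intro powr_less_mono2) auto
          also have "\<dots> \<le> ((\<eta> / 13) powr (4 / \<epsilon>)) powr (\<epsilon>/4)"
            using kappa0 eps0 unfolding \<kappa>_def by (intro powr_mono2) auto
          also have "\<dots> = \<eta> / 13" using eps0 eta0 by (simp add: powr_powr)
          finally show ?thesis unfolding s_def by simp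
        qed
        have s0: "s > 0" unfolding s_def using m0 by simp
        have d0': "d > 0" unfolding d_def using m0 by simp
        have sqd: "sqrt d = s"
        proof -
          have "m powr ((\<epsilon>/2)/2) = sqrt (m powr (\<epsilon>/2))" using m0 by (intro powr_half_sqrt_powr) simp
          then show ?thesis unfolding s_def d_def by simp
        qed
        have ds: "d \<le> s" unfolding d_def s_def using m0 m1 eps0 by (intro powr_mono') auto
        have cp: "c \<le> 1 / (2 - c)"
        proof -
          have sq: "(1 - c)^2 \<ge> 0" by simp
          have "1 - c * (2 - c) = (1 - c)^2" by (simp add: power2_eq_square algebra_simps)
          then have "c * (2 - c) \<le> 1" using sq by linarith
          then show ?thesis using c1 by (simp add: le_divide_eq)
        qed
        have eps1c: "\<epsilon> \<le> 1 - c"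
        proof -
          have "(1 - c) / (2 - c) \<le> (1 - c) / 1" using c1 c0' by (intro divide_left_mono) auto
          then show ?thesis using epsc by simp
        qed
        have pc: "c + \<epsilon> \<le> p" unfolding p_def using cp by simp
        have Lpos: "L > 0" unfolding L_def using mL m0 unfolding m_def by simp
        have Ld: "L \<le> d"
        proof -
          have "m powr p \<le> m powr (\<epsilon>/2)" using m0 m1 pc c0' eps0 by (intro powr_mono') auto
          then show ?thesis using Lp unfolding L_def d_def by simp
        qed
        define u where "u = (b - a) / d"
        define W where "W = 2 * exp 1 * (b - a) / measure lebesgue E"
        define g where "g = 4 * (d + (b - a)) + sqrt (3 * (4 * (d + (b - a))))"
        have u0: "u > 0" unfolding u_def using Lpos d0' unfolding L_def by simp
        have upow: "u \<le> m powr (p - \<epsilon>/2)"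
        proof -
          have "u \<le> m powr p / d" unfolding u_def using Lp d0' by (simp add: divide_right_mono)
          also have "\<dots> = m powr (p - \<epsilon>/2)" unfolding d_def by (simp add: powr_diff)
          finally show ?thesis .
        qed
        have ub: "u \<le> exp (-((c + \<epsilon>/2) * \<Lambda>))"
        proof -
          have "m powr (p - \<epsilon>/2) \<le> m powr (c + \<epsilon>/2)" using m0 m1 pc by (intro powr_mono') auto
          also have "\<dots> = exp (-((c + \<epsilon>/2) * \<Lambda>))" unfolding \<Lambda>_def using m0 by (simp add: powr_def)
          finally show ?thesis using upow by simp
        qed
        have ue: "u \<le> \<eta>"
        proof -
          have "m powr (p - \<epsilon>/2) \<le> m powr (\<epsilon>/4)" using m0 m1 pc c0' eps0 by (intro powr_mono') auto
          then have "u \<le> s" using upow unfolding s_def by simp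
          then show ?thesis using s_eta eta0 by simp
        qed
        have g0: "0 \<le> g" unfolding g_def using d0' Lpos unfolding L_def by simp
        have ge: "g \<le> \<eta>"
        proof -
          have dL: "d + (b - a) \<le> 2 * d" using Ld unfolding L_def by simp
          have "sqrt (3 * (4 * (d + (b - a)))) \<le> sqrt (24 * d)" using dL by simp
          also have "\<dots> = sqrt 24 * s" using sqd by (simp add: real_sqrt_mult)
          also have "\<dots> \<le> 5 * s"
          proof -
            have "sqrt 24 \<le> sqrt ((5::real)^2)" by (intro real_sqrt_le_mono) simp
            then have "sqrt 24 \<le> (5::real)" by (simp only: real_sqrt_abs)
            then show ?thesis using s0 by (intro mult_right_mono) auto
          qed
          finally have "sqrt (3 * (4 * (d + (b - a)))) \<le> 5 * s" .
          moreover have "4 * (d + (b - a)) \<le> 8 * s" using dL ds by simp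
          ultimately have "g \<le> 13 * s" unfolding g_def by simp
          then show ?thesis using s_eta by simp
        qed
        have d18: "d \<le> 1/8" using ds s_eta eta1 by simp
        have W1: "W \<ge> 1"
        proof -
          have "1 \<le> (b - a) / m" using mL m0 by simp
          moreover have "1 \<le> 2 * exp (1::real)" using exp_ge_add_one_self[of 1] by simp
          ultimately have "1 * 1 \<le> (2 * exp 1) * ((b - a) / m)" by (intro mult_mono) auto
          then show ?thesis unfolding W_def m_def by simp
        qed
        have lnW: "ln W \<le> 2 + (1 - c - \<epsilon>) * \<Lambda>"
        proof -
          have "ln W = ln 2 + 1 + ln (b - a) - ln m"
            unfolding W_def m_def[symmetric] using Lpos m0 unfolding L_def by (simp add: ln_mult ln_div)
          moreover have "ln (b - a) \<le> p * ln m"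
          proof -
            have "ln (b - a) \<le> ln (m powr p)" using Lpos Lp m0 unfolding L_def
              by (subst ln_le_cancel_iff) auto
            then show ?thesis using m0 by simp
          qed
          moreover have "ln (2::real) \<le> 1" using ln_2_less_1 by simp
          moreover have "(1 - p) * \<Lambda> \<le> (1 - c - \<epsilon>) * \<Lambda>" using pc L2 by (intro mult_right_mono) auto
          ultimately show ?thesis unfolding \<Lambda>_def by (simp add: algebra_simps)
        qed
        obtain k where kn: "k \<le> n" and kb: "exp (-\<delta> * real n) * W^k * exp (real n * u)
            + (if k < n then u^(k+1) * exp (real n * g) else 0) \<le> exp (-c * \<delta> * real n)"
          using choose_k[OF cc0 c00 c1 eps0 eps1c L10 L2 W1 lnW u0 ub ue g0 ge eta1 dd d0 Ke ee e1 e2, where n = n]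
          by blast
        have m0': "measure lebesgue E > 0" using m0 unfolding m_def .
        have Ld': "b - a \<le> d" using Ld unfolding L_def .
        have "\<bar>poly P x\<bar> \<le> M * W^k * exp (real n * u) + (if k < n then u^(k+1) * exp (real n * g) else 0)"
          unfolding W_def u_def g_def
          by (rule geo_bound[OF degP kn Em Eab m0' PE P1 a1 b1 ab d0' d18 Ld' x])
        then show ?thesis using kb unfolding M_def by linarith
      qed
    qed
  qed
qed


end
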